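(* Let $Q\in\mathcal{P}$ be a distribution whose support contains at least two points. Then for every $v>0$ there is a measurable map $\pi:\Omega\to\{1,2\}$ such that $$D^*(v,Q)=D^*(v,\pi(Q)).$$
   Context: Let $(\Omega,\mathcal{F},\mu)$ be a finite or $\sigma$-finite measure space, and let $\mathcal{P}$ be the set of probability measures on $(\Omega,\mathcal{F})$ absolutely continuous with respect to $\mu$. For $P,Q\in\mathcal{P}$ the lower-case letters $p,q$ denote their densities with respect to $\mu$. The Kullback–Leibler divergence is $D(P\Vert Q)=\int\ln\frac{dP}{dQ}\,dP$ if $P\ll Q$, and $+\infty$ otherwise. The total variation distance is $V(P,Q)=\int_\Omega|p-q|\,d\mu$. For $v>0$ define $D^*(v,Q)=\inf\{D(P\Vert Q):P\in\mathcal{P},\ V(P,Q)\ge v\}$, with $\inf\emptyset=+\infty$. The same definitions apply to distributions on $\{1,2\}$, taking the counting measure as reference measure. For a measurable map $\pi:\Omega\to\{1,2\}$, $\pi(Q)$ denotes the distribution $(Q(\pi^{-1}(1)),Q(\pi^{-1}(2)))$ on $\{1,2\}$. *)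

theory Defs
  imports "HOL-Probability.Probability"
begin

definition probs :: "'a measure \<Rightarrow> 'a measure set" where
  "probs M = {P. sets P = sets M \<and> prob_space P \<and> absolutely_continuous M P}"

definition dens :: "'a measure \<Rightarrow> 'a measure \<Rightarrow> 'a \<Rightarrow> real" where
  "dens M P x = enn2real (RN_deriv M P x)"

definition tvd :: "'a measure \<Rightarrow> 'a measure \<Rightarrow> 'a measure \<Rightarrow> real" where
  "tvd M P Q = enn2real (\<integral>\<^sup>+ x. ennreal \<bar>dens M P x - dens M Q x\<bar> \<partial>M)"

definition KL :: "'a measure \<Rightarrow> 'a measure \<Rightarrow> ereal" where
  "KL P Q = (if absolutely_continuous Q P
     then enn2ereal (\<integral>\<^sup>+ x. ennreal (ln (enn2real (RN_deriv Q P x))) \<partial>P)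
        - enn2ereal (\<integral>\<^sup>+ x. ennreal (- ln (enn2real (RN_deriv Q P x))) \<partial>P)
     else \<infinity>)"

definition Dstar :: "'a measure \<Rightarrow> real \<Rightarrow> 'a measure \<Rightarrow> ereal" where
  "Dstar M v Q = Inf {KL P Q | P. P \<in> probs M \<and> tvd M P Q \<ge> v}"

end

theory Submission
  imports Defs "HOL-Real_Asymp.Real_Asymp"
begin


definition sig :: "(nat \<Rightarrow> real) \<Rightarrow> nat set \<Rightarrow> real" where
  "sig m S = (\<Sum>k. if k \<in> S then m k else 0)"

lemma sig_summable:
  fixes m :: "nat \<Rightarrow> real"
  assumes "\<And>k. 0 \<le> m k" "summable m"
  shows "summable (\<lambda>k. if k \<in> S then m k else 0)"
  by (rule summable_comparison_test'[where g=m and N=0]) (use assms in auto)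

lemma sig_partial_le:
  fixes m :: "nat \<Rightarrow> real"
  assumes "\<And>k. 0 \<le> m k" "summable m"
  shows "(\<Sum>i<n. if i \<in> S then m i else 0) \<le> sig m S"
  unfolding sig_def by (rule sum_le_suminf[OF sig_summable[OF assms]]) (use assms(1) in auto)

lemma sig_tail:
  fixes m :: "nat \<Rightarrow> real"
  assumes m: "\<And>k. 0 \<le> m k" "summable m"
  shows "sig m S \<le> (\<Sum>i<n. if i \<in> S then m i else 0) + (suminf m - (\<Sum>i<n. m i))"
proof -
  let ?f = "\<lambda>k. if k \<in> S then m k else 0"
  have sf: "summable ?f" by (rule sig_summable[OF m])
  have "sig m S = (\<Sum>j. ?f (j + n)) + (\<Sum>i<n. ?f i)"
    unfolding sig_def by (rule suminf_split_initial_segment[OF sf])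
  also have "(\<Sum>j. ?f (j + n)) \<le> (\<Sum>j. m (j + n))"
    by (intro suminf_le) (use m sf summable_iff_shift[of ?f n] summable_iff_shift[of m n] in auto)
  also have "(\<Sum>j. m (j + n)) = suminf m - (\<Sum>i<n. m i)"
    by (rule suminf_minus_initial_segment[OF m(2)])
  finally show ?thesis by simp
qed

lemma tail_lim:
  assumes "summable (m :: nat \<Rightarrow> real)"
  shows "(\<lambda>n. suminf m - (\<Sum>i<n. m i)) \<longlonglongrightarrow> 0"
proof -
  have "(\<lambda>n. (\<Sum>i<n. m i)) \<longlonglongrightarrow> suminf m" using summable_LIMSEQ[OF assms] .
  then have "(\<lambda>n. suminf m - (\<Sum>i<n. m i)) \<longlonglongrightarrow> suminf m - suminf m"
    by (intro tendsto_diff tendsto_const)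
  then show ?thesis by simp
qed

lemma prefix_max:
  fixes m :: "nat \<Rightarrow> real"
  assumes m: "\<And>k. 0 \<le> m k" "summable m" and c: "0 \<le> c"
  shows "\<exists>S. sig m S \<le> c \<and> (\<forall>S'. sig m S' \<le> c \<longrightarrow> sig m S' \<le> sig m S)"
proof -
  let ?V = "sig m ` {S. sig m S \<le> c}"
  have "{} \<in> {S. sig m S \<le> c}" using c by (simp add: sig_def)
  then have ne: "?V \<noteq> {}" by blast
  have bdd: "bdd_above ?V" by (intro bdd_aboveI[of _ c]) auto
  define s where "s = Sup ?V"
  have s_up: "sig m S \<le> s" if "sig m S \<le> c" for S
    unfolding s_def using that by (intro cSup_upper bdd) auto
  define Phi where "Phi P k \<longleftrightarrow> (\<forall>e>0. \<exists>S. sig m S \<le> c \<and> S \<inter> {..<k} = P \<and> sig m S > s - e)" for P k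
  define P where "P = rec_nat {} (\<lambda>k Pk. if Phi (insert k Pk) (Suc k) then insert k Pk else Pk)"
  have P0: "P 0 = {}" unfolding P_def by simp
  have PS: "P (Suc k) = (if Phi (insert k (P k)) (Suc k) then insert k (P k) else P k)" for k
    unfolding P_def by simp
  have Psub: "P k \<subseteq> {..<k}" for k
    by (induction k) (auto simp: P0 PS)
  have Phi0: "Phi {} 0"
    unfolding Phi_def
  proof (intro allI impI)
    fix e :: real assume "e > 0"
    then have "s - e < s" by simp
    then obtain y where "y \<in> ?V" "s - e < y" unfolding s_def using less_cSup_iff[OF ne bdd] by blast
    then show "\<exists>S. sig m S \<le> c \<and> S \<inter> {..<0} = {} \<and> s - e < sig m S" by auto
  qed
  have PhiP: "Phi (P k) k" for k
  proof (induction k)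
    case 0 then show ?case using Phi0 by (simp add: P0)
  next
    case (Suc k)
    show ?case
    proof (cases "Phi (insert k (P k)) (Suc k)")
      case True then show ?thesis by (simp add: PS)
    next
      case False
      then obtain e1 where e1: "e1 > 0"
        and no: "\<And>S. sig m S \<le> c \<Longrightarrow> S \<inter> {..<Suc k} = insert k (P k) \<Longrightarrow> sig m S \<le> s - e1"
        unfolding Phi_def by (auto simp: not_less)
      have "Phi (P k) (Suc k)"
        unfolding Phi_def
      proof (intro allI impI)
        fix e :: real assume e: "e > 0"
        obtain S where S: "sig m S \<le> c" "S \<inter> {..<k} = P k" "sig m S > s - min e e1"
          using Suc.IH e e1 unfolding Phi_def by (metis min_less_iff_conj)
        have "k \<notin> S"
        proof
          assume "k \<in> S"
          then have "S \<inter> {..<Suc k} = insert k (P k)" using S(2) by (auto simp: lessThan_Suc)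
          then have "sig m S \<le> s - e1" using no S(1) by blast
          then show False using S(3) by linarith
        qed
        then have "S \<inter> {..<Suc k} = P k" using S(2) by (auto simp: lessThan_Suc)
        then show "\<exists>S. sig m S \<le> c \<and> S \<inter> {..<Suc k} = P k \<and> sig m S > s - e"
          using S by (intro exI[of _ S]) auto
      qed
      then show ?thesis using False by (simp add: PS)
    qed
  qed
  define Ss where "Ss = {k. k \<in> P (Suc k)}"
  have SsP: "Ss \<inter> {..<n} = P n" for n
  proof (induction n)
    case 0 then show ?case by (simp add: P0)
  next
    case (Suc n)
    have "P (Suc n) = P n \<or> P (Suc n) = insert n (P n)" by (simp add: PS)
    moreover have "n \<notin> P n" using Psub[of n] by auto
    ultimately show ?case using Suc.IH unfolding Ss_def by (auto simp: lessThan_Suc)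
  qed
  have part: "(\<Sum>i<n. if i \<in> Ss then m i else 0) = (\<Sum>i<n. if i \<in> S then m i else 0)"
    if "S \<inter> {..<n} = P n" for S n
  proof (intro sum.cong refl)
    fix i assume "i \<in> {..<n}"
    then have "i \<in> Ss \<longleftrightarrow> i \<in> S" using that SsP[of n] by blast
    then show "(if i \<in> Ss then m i else 0) = (if i \<in> S then m i else 0)" by simp
  qed
  have Ssc: "sig m Ss \<le> c"
    unfolding sig_def
  proof (rule suminf_le_const[OF sig_summable[OF m]])
    fix n
    obtain S where S: "sig m S \<le> c" "S \<inter> {..<n} = P n"
      using PhiP[of n] unfolding Phi_def by (metis zero_less_one)
    show "(\<Sum>i<n. if i \<in> Ss then m i else 0) \<le> c"
      using part[OF S(2)] sig_partial_le[OF m, where n=n and S=S] S(1) by linarith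
  qed
  have Sss: "s \<le> sig m Ss"
  proof (rule field_le_epsilon)
    fix e :: real assume e: "e > 0"
    have "s - e - (suminf m - (\<Sum>i<n. m i)) \<le> sig m Ss" for n
    proof -
      obtain S where S: "sig m S \<le> c" "S \<inter> {..<n} = P n" "sig m S > s - e"
        using PhiP[of n] e unfolding Phi_def by blast
      have "sig m S \<le> (\<Sum>i<n. if i \<in> Ss then m i else 0) + (suminf m - (\<Sum>i<n. m i))"
        using sig_tail[OF m, where n=n and S=S] part[OF S(2)] by simp
      then show ?thesis using S(3) sig_partial_le[OF m, where n=n and S=Ss] by linarith
    qed
    moreover have "(\<lambda>n. s - e - (suminf m - (\<Sum>i<n. m i))) \<longlonglongrightarrow> s - e - 0"
      by (intro tendsto_diff tendsto_const tail_lim m)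
    ultimately have "s - e - 0 \<le> sig m Ss"
      by (intro LIMSEQ_le_const2) auto
    then show "s \<le> sig m Ss + e" by simp
  qed
  show ?thesis using Ssc Sss s_up by (intro exI[of _ Ss]) force
qed



definition is_atom :: "'a measure \<Rightarrow> 'a set \<Rightarrow> bool" where
  "is_atom M A \<longleftrightarrow> A \<in> sets M \<and> measure M A > 0 \<and>
     (\<forall>B\<in>sets M. B \<subseteq> A \<longrightarrow> measure M B = 0 \<or> measure M B = measure M A)"


context prob_space
begin

lemma greedy_step:
  assumes adm: "\<And>F. Adm F \<Longrightarrow> F \<in> events" and adm0: "Adm {}"
  shows "\<exists>F. Adm F \<and> (\<forall>G. Adm G \<longrightarrow> prob G \<le> 2 * prob F)"
proof -
  let ?V = "prob ` {F. Adm F}"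
  have bdd: "bdd_above ?V" by (intro bdd_aboveI[of _ 1]) auto
  have ne: "?V \<noteq> {}" using adm0 by auto
  define s where "s = Sup ?V"
  show ?thesis
  proof (cases "s > 0")
    case True
    then have "s/2 < s" by auto
    then obtain y where "y \<in> ?V" "s/2 < y" unfolding s_def using less_cSup_iff[OF ne bdd] by blast
    then obtain F where F: "Adm F" "s/2 < prob F" by auto
    have "prob G \<le> 2 * prob F" if "Adm G" for G
    proof -
      have "prob G \<le> s" unfolding s_def using that by (intro cSup_upper bdd) auto
      then show ?thesis using F by auto
    qed
    then show ?thesis using F by blast
  next
    case False
    have "prob G \<le> 2 * prob {}" if "Adm G" for G
    proof -
      have "prob G \<le> s" unfolding s_def using that by (intro cSup_upper bdd) auto
      then show ?thesis using False by auto
    qed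
    then show ?thesis using adm0 by blast
  qed
qed

lemma greedy:
  assumes adm: "\<And>C F. Adm C F \<Longrightarrow> F \<in> events \<and> F \<inter> C = {}" and adm0: "\<And>C. Adm C {}"
  shows "\<exists>F :: nat \<Rightarrow> 'a set. (\<forall>k. Adm (\<Union>i<k. F i) (F k)) \<and>
            (\<forall>k G. Adm (\<Union>i<k. F i) G \<longrightarrow> prob G \<le> 2 * prob (F k))"
proof -
  define step where "step C = (SOME F. Adm C F \<and> (\<forall>G. Adm C G \<longrightarrow> prob G \<le> 2 * prob F))" for C
  have step: "Adm C (step C) \<and> (\<forall>G. Adm C G \<longrightarrow> prob G \<le> 2 * prob (step C))" for C
  proof -
    have ex: "\<exists>F. Adm C F \<and> (\<forall>G. Adm C G \<longrightarrow> prob G \<le> 2 * prob F)"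
      using greedy_step[of "Adm C"] adm adm0 by blast
    show ?thesis unfolding step_def by (rule someI_ex[OF ex])
  qed
  define C where "C = rec_nat {} (\<lambda>k Ck. Ck \<union> step Ck)"
  have C0: "C 0 = {}" and CS: "C (Suc k) = C k \<union> step (C k)" for k unfolding C_def by simp_all
  define F where "F k = step (C k)" for k
  have Fk: "F k = step (C k)" for k by (simp add: F_def)
  have CU: "C k = (\<Union>i<k. F i)" for k
  proof (induction k)
    case 0 then show ?case by (simp add: C0)
  next
    case (Suc k)
    have "C (Suc k) = C k \<union> F k" by (simp add: CS Fk)
    then show ?case using Suc.IH by (simp add: lessThan_Suc Un_commute)
  qed
  have A1: "Adm (\<Union>i<k. F i) (F k)" for k using step[of "C k"] CU[of k] Fk[of k] by simp
  have A2: "Adm (\<Union>i<k. F i) G \<longrightarrow> prob G \<le> 2 * prob (F k)" for k G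
    using step[of "C k"] CU[of k] Fk[of k] by simp
  show ?thesis using A1 A2 by (intro exI[of _ F]) simp
qed

lemma greedy_disj:
  fixes F :: "nat \<Rightarrow> 'a set"
  assumes "\<And>k. F k \<in> events" "\<And>k. F k \<inter> (\<Union>i<k. F i) = {}"
  shows "disjoint_family F"
  unfolding disjoint_family_on_def
proof (intro ballI impI)
  fix m n :: nat assume "m \<noteq> n"
  then consider "m < n" | "n < m" by linarith
  then show "F m \<inter> F n = {}"
    using assms(2)[of n] assms(2)[of m] by cases auto
qed

lemma greedy_vanish:
  assumes adm: "\<And>C F. Adm C F \<Longrightarrow> F \<in> events \<and> F \<inter> C = {}" and adm0: "\<And>C. Adm C {}"
  shows "\<exists>F :: nat \<Rightarrow> 'a set. (\<forall>k. Adm (\<Union>i<k. F i) (F k)) \<and> disjoint_family F \<and>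
            (\<forall>G. (\<forall>k. Adm (\<Union>i<k. F i) G) \<longrightarrow> prob G = 0)"
proof -
  obtain F :: "nat \<Rightarrow> 'a set" where F1: "\<forall>k. Adm (\<Union>i<k. F i) (F k)"
    and F2: "\<forall>k G. Adm (\<Union>i<k. F i) G \<longrightarrow> prob G \<le> 2 * prob (F k)"
    using greedy[of Adm, OF adm adm0] by auto
  have ev: "F k \<in> events" for k using adm[OF F1[rule_format, of k]] by blast
  have dj0: "F k \<inter> (\<Union>i<k. F i) = {}" for k using adm[OF F1[rule_format, of k]] by blast
  have dj: "disjoint_family F" by (rule greedy_disj[OF ev dj0])
  have "(\<lambda>k. prob (F k)) sums prob (\<Union>k. F k)"
    using ev dj by (intro finite_measure_UNION) auto
  then have l0: "(\<lambda>k. prob (F k)) \<longlonglongrightarrow> 0" by (rule summable_LIMSEQ_zero[OF sums_summable])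
  have lim2: "(\<lambda>k. 2 * prob (F k)) \<longlonglongrightarrow> 0" using tendsto_mult[OF tendsto_const[of 2] l0] by simp
  have "prob G = 0" if G: "\<forall>k. Adm (\<Union>i<k. F i) G" for G
  proof -
    have "prob G \<le> 0"
      by (intro LIMSEQ_le_const[OF lim2] exI[of _ 0] allI impI) (use F2 G in blast)
    then show ?thesis using measure_nonneg[of M G] by linarith
  qed
  then have vanish: "\<forall>G. (\<forall>k. Adm (\<Union>i<k. F i) G) \<longrightarrow> prob G = 0" by blast
  show ?thesis using F1 dj vanish by (intro exI[of _ F]) simp
qed


lemma small_subset:
  assumes E: "E \<in> events" "prob E > 0" and na: "\<And>B. B \<subseteq> E \<Longrightarrow> \<not> is_atom M B"
  shows "\<exists>F\<in>events. F \<subseteq> E \<and> 0 < prob F \<and> prob F \<le> prob E / 2^n"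
proof (induction n)
  case 0 then show ?case using E by auto
next
  case (Suc n)
  then obtain F where F: "F \<in> events" "F \<subseteq> E" "0 < prob F" "prob F \<le> prob E / 2^n" by blast
  have "\<not> is_atom M F" using na F(2) by blast
  then obtain B where B: "B \<in> events" "B \<subseteq> F" "prob B \<noteq> 0" "prob B \<noteq> prob F"
    using F unfolding is_atom_def by auto
  have "prob B \<le> prob F" using B F by (intro finite_measure_mono) auto
  then have B1: "0 < prob B" "prob B < prob F" using B(3,4) measure_nonneg[of M B] by linarith+
  have B2: "prob (F - B) = prob F - prob B" using B F by (intro finite_measure_Diff) auto
  have half: "prob F / 2 \<le> prob E / 2^(Suc n)" using F(4) by (simp add: field_simps)
  show ?case
  proof (cases "prob B \<le> prob F / 2")
    case True
    then show ?thesis using B B1 F half by (intro bexI[of _ B]) auto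
  next
    case False
    then show ?thesis using B B1 B2 F half by (intro bexI[of _ "F - B"]) auto
  qed
qed

lemma small_eps:
  assumes E: "E \<in> events" "prob E > 0" and na: "\<And>B. B \<subseteq> E \<Longrightarrow> \<not> is_atom M B" and e: "e > 0"
  shows "\<exists>F\<in>events. F \<subseteq> E \<and> 0 < prob F \<and> prob F \<le> e"
proof -
  have "e / prob E > 0" using E e by simp
  then obtain n where n: "(1/2::real)^n < e / prob E"
    using real_arch_pow_inv[of "e / prob E" "1/2"] by auto
  have "prob E / 2^n = prob E * (1/2)^n" by (simp add: field_simps)
  also have "\<dots> < prob E * (e / prob E)" using n E by (intro mult_strict_left_mono) auto
  also have "\<dots> = e" using E by simp
  finally have "prob E / 2^n < e" .
  moreover obtain F where "F \<in> events" "F \<subseteq> E" "0 < prob F" "prob F \<le> prob E / 2^n"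
    using small_subset[OF E na, of n] by blast
  ultimately show ?thesis by (intro bexI[of _ F]) auto
qed

lemma sierpinski:
  assumes N: "N \<in> events" and na: "\<And>B. B \<subseteq> N \<Longrightarrow> \<not> is_atom M B" and c: "0 \<le> c" "c \<le> prob N"
  shows "\<exists>B\<in>events. B \<subseteq> N \<and> prob B = c"
proof -
  define Adm where "Adm C F \<longleftrightarrow> F = {} \<or> (F \<in> events \<and> F \<subseteq> N - C \<and> prob C + prob F \<le> c)" for C F
  have adm: "F \<in> events \<and> F \<inter> C = {}" if "Adm C F" for C F using that unfolding Adm_def by auto
  have adm0: "Adm C {}" for C unfolding Adm_def by auto
  obtain F :: "nat \<Rightarrow> 'a set" where F1: "\<forall>k. Adm (\<Union>i<k. F i) (F k)" and dj: "disjoint_family F"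
    and van: "\<forall>G. (\<forall>k. Adm (\<Union>i<k. F i) G) \<longrightarrow> prob G = 0"
    using greedy_vanish[of Adm, OF adm adm0] by auto
  have ev: "F k \<in> events" for k using adm[OF F1[rule_format, of k]] by blast
  have FN: "F k \<subseteq> N" for k using F1[rule_format, of k] unfolding Adm_def by auto
  define C where "C k = (\<Union>i<k. F i)" for k
  have Cev: "C k \<in> events" for k unfolding C_def using ev by auto
  have Cle: "prob (C k) \<le> c" for k
  proof (induction k)
    case 0 then show ?case using c by (simp add: C_def)
  next
    case (Suc k)
    have CS: "C (Suc k) = C k \<union> F k" unfolding C_def by (auto simp: lessThan_Suc)
    show ?case
    proof (cases "F k = {}")
      case True then show ?thesis using Suc CS by simp
    next
      case False
      then have a: "F k \<subseteq> N - C k" "prob (C k) + prob (F k) \<le> c"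
        using F1[rule_format, of k] unfolding Adm_def C_def by auto
      have "prob (C (Suc k)) = prob (C k) + prob (F k)"
        unfolding CS using a Cev ev by (intro finite_measure_Union) auto
      then show ?thesis using a by simp
    qed
  qed
  define B where "B = (\<Union>k. F k)"
  have Bev: "B \<in> events" unfolding B_def using ev by auto
  have BN: "B \<subseteq> N" unfolding B_def using FN by auto
  have CB: "(\<Union>k. C k) = B" unfolding C_def B_def by auto
  have "incseq C" unfolding C_def incseq_def by (intro allI impI UN_mono) auto
  then have "(\<lambda>k. prob (C k)) \<longlonglongrightarrow> prob (\<Union>k. C k)"
    using Cev by (intro finite_Lim_measure_incseq) auto
  then have Blim: "(\<lambda>k. prob (C k)) \<longlonglongrightarrow> prob B" unfolding CB .
  have Bc: "prob B \<le> c" by (rule LIMSEQ_le_const2[OF Blim]) (use Cle in auto)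
  have CsB: "C k \<subseteq> B" for k unfolding C_def B_def by auto
  have "prob B = c"
  proof (rule ccontr)
    assume "prob B \<noteq> c"
    then have lt: "prob B < c" using Bc by simp
    have E: "N - B \<in> events" using N Bev by auto
    have pE: "prob (N - B) = prob N - prob B" using N Bev BN by (intro finite_measure_Diff) auto
    then have pE0: "prob (N - B) > 0" using lt c by simp
    have na': "\<And>B'. B' \<subseteq> N - B \<Longrightarrow> \<not> is_atom M B'" using na by blast
    have cpos: "c - prob B > 0" using lt by simp
    obtain G where G: "G \<in> events" "G \<subseteq> N - B" "0 < prob G" "prob G \<le> c - prob B"
      using small_eps[OF E pE0 na' cpos] by blast
    have "Adm (\<Union>i<k. F i) G" for k
    proof -
      have "prob (C k) \<le> prob B" using CsB Bev by (intro finite_measure_mono) auto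
      then show ?thesis unfolding Adm_def C_def[symmetric] using G CsB[of k] by auto
    qed
    then have "prob G = 0" using van by blast
    then show False using G by simp
  qed
  then show ?thesis using Bev BN by blast
qed

lemma atom_decomp:
  "\<exists>At :: nat \<Rightarrow> 'a set. disjoint_family At \<and> (\<forall>k. At k = {} \<or> is_atom M (At k)) \<and>
     (\<forall>B. B \<subseteq> space M - (\<Union>k. At k) \<longrightarrow> \<not> is_atom M B)"
proof -
  define Adm where "Adm C F \<longleftrightarrow> F = {} \<or> (is_atom M F \<and> F \<inter> C = {})" for C F
  have adm: "F \<in> events \<and> F \<inter> C = {}" if "Adm C F" for C F using that unfolding Adm_def is_atom_def by auto
  have adm0: "Adm C {}" for C unfolding Adm_def by auto
  obtain F :: "nat \<Rightarrow> 'a set" where F1: "\<forall>k. Adm (\<Union>i<k. F i) (F k)" and dj: "disjoint_family F"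
    and van: "\<forall>G. (\<forall>k. Adm (\<Union>i<k. F i) G) \<longrightarrow> prob G = 0"
    using greedy_vanish[of Adm, OF adm adm0] by auto
  have at: "F k = {} \<or> is_atom M (F k)" for k using F1[rule_format, of k] unfolding Adm_def by auto
  have "\<not> is_atom M B" if "B \<subseteq> space M - (\<Union>k. F k)" for B
  proof
    assume a: "is_atom M B"
    then have "Adm (\<Union>i<k. F i) B" for k using that unfolding Adm_def by auto
    then have "prob B = 0" using van by blast
    then show False using a unfolding is_atom_def by simp
  qed
  then show ?thesis using dj at by (intro exI[of _ F]) auto
qed


lemma sup_attained:
  assumes c: "0 \<le> c"
  shows "\<exists>A\<in>events. prob A \<le> c \<and> (\<forall>A'\<in>events. prob A' \<le> c \<longrightarrow> prob A' \<le> prob A)"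
proof -
  obtain At :: "nat \<Rightarrow> 'a set" where dj: "disjoint_family At" and at: "\<And>k. At k = {} \<or> is_atom M (At k)"
    and na: "\<And>B. B \<subseteq> space M - (\<Union>k. At k) \<Longrightarrow> \<not> is_atom M B"
    using atom_decomp by blast
  define N where "N = space M - (\<Union>k. At k)"
  have Atev: "At k \<in> events" for k using at[of k] unfolding is_atom_def by auto
  have Nev: "N \<in> events" unfolding N_def using Atev by auto
  define m where "m k = prob (At k)" for k
  have m0: "0 \<le> m k" for k unfolding m_def by simp
  have msum: "summable m" unfolding m_def
    using finite_measure_UNION[of At] Atev dj sums_summable by auto
  have decomp: "(\<lambda>k. prob (A \<inter> At k)) sums (prob A - prob (A \<inter> N))" if A: "A \<in> events" for A
  proof -
    have djA: "disjoint_family (\<lambda>k. A \<inter> At k)"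
      using dj unfolding disjoint_family_on_def by auto
    have s1: "(\<lambda>k. prob (A \<inter> At k)) sums prob (\<Union>k. A \<inter> At k)"
      using A Atev djA by (intro finite_measure_UNION) auto
    have Aeq: "A = (\<Union>k. A \<inter> At k) \<union> (A \<inter> N)"
      using sets.sets_into_space[OF A] unfolding N_def by auto
    have "prob A = prob (\<Union>k. A \<inter> At k) + prob (A \<inter> N)"
      by (subst Aeq, rule finite_measure_Union) (use A Atev Nev in \<open>auto simp: N_def\<close>)
    then show ?thesis using s1 by simp
  qed
  have atval: "prob (A \<inter> At k) = (if k \<in> {k. prob (A \<inter> At k) \<noteq> 0} then m k else 0)"
    if A: "A \<in> events" for A k
  proof (cases "At k = {}")
    case True then show ?thesis by (simp add: m_def)
  next
    case False
    then have "is_atom M (At k)" using at by blast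
    then have "prob (A \<inter> At k) = 0 \<or> prob (A \<inter> At k) = m k"
      unfolding is_atom_def m_def using A Atev by auto
    then show ?thesis by auto
  qed
  have sigA: "sig m {k. prob (A \<inter> At k) \<noteq> 0} = prob A - prob (A \<inter> N)" if A: "A \<in> events" for A
  proof -
    have "(\<lambda>k. if k \<in> {k. prob (A \<inter> At k) \<noteq> 0} then m k else 0) sums (prob A - prob (A \<inter> N))"
    proof -
      have "(\<lambda>k. if k \<in> {k. prob (A \<inter> At k) \<noteq> 0} then m k else 0) = (\<lambda>k. prob (A \<inter> At k))"
        by (rule ext, rule atval[OF A, symmetric])
      then show ?thesis using decomp[OF A] by simp
    qed
    then show ?thesis unfolding sig_def by (rule sums_unique[symmetric])
  qed
  obtain S where S1: "sig m S \<le> c" and S2: "\<And>S'. sig m S' \<le> c \<Longrightarrow> sig m S' \<le> sig m S"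
    using prefix_max[OF m0 msum c] by blast
  define x where "x = min (prob N) (c - sig m S)"
  have x: "0 \<le> x" "x \<le> prob N" unfolding x_def using S1 by auto
  have naN: "\<And>B. B \<subseteq> N \<Longrightarrow> \<not> is_atom M B" using na unfolding N_def by blast
  obtain B where B: "B \<in> events" "B \<subseteq> N" "prob B = x"
    using sierpinski[OF Nev naN x] by blast
  define As where "As = (\<Union>k\<in>S. At k) \<union> B"
  have Asev: "As \<in> events" unfolding As_def using Atev B by auto
  have AsAt: "As \<inter> At k = (if k \<in> S then At k else {})" for k
  proof -
    have "B \<inter> At k = {}" using B(2) unfolding N_def by auto
    moreover have "At j \<inter> At k = {}" if "j \<noteq> k" for j using dj that unfolding disjoint_family_on_def by auto
    ultimately show ?thesis unfolding As_def by auto (metis IntI empty_iff)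
  qed
  have AsN: "As \<inter> N = B" unfolding As_def N_def using B(2) unfolding N_def by auto
  have sAs: "(\<lambda>k. if k \<in> S then m k else 0) sums (prob As - prob B)"
  proof -
    have "(\<lambda>k. prob (As \<inter> At k)) = (\<lambda>k. if k \<in> S then m k else 0)"
      by (rule ext) (simp add: AsAt m_def)
    then show ?thesis using decomp[OF Asev] AsN by simp
  qed
  have "sig m S = prob As - prob B" unfolding sig_def by (rule sums_unique[symmetric, OF sAs])
  then have pAs: "prob As = sig m S + x" using B(3) by simp
  show ?thesis
  proof (intro bexI[of _ As] conjI ballI impI)
    show "prob As \<le> c" using pAs x_def by auto
  next
    fix A' assume A': "A' \<in> events" "prob A' \<le> c"
    have e: "prob A' = sig m {k. prob (A' \<inter> At k) \<noteq> 0} + prob (A' \<inter> N)" using sigA[OF A'(1)] by simp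
    have pN: "prob (A' \<inter> N) \<le> prob N" using Nev by (intro finite_measure_mono) auto
    have "sig m {k. prob (A' \<inter> At k) \<noteq> 0} \<le> c" using e A'(2) measure_nonneg[of M "A' \<inter> N"] by linarith
    then have "sig m {k. prob (A' \<inter> At k) \<noteq> 0} \<le> sig m S" by (rule S2)
    then show "prob A' \<le> prob As" using e pN pAs A'(2) unfolding x_def by auto
  qed (rule Asev)
qed

lemma range_closed': "closed {prob A | A. A \<in> events}"
  unfolding closed_sequential_limits
proof (intro allI impI, elim conjE)
  fix X :: "nat \<Rightarrow> real" and l assume X: "\<forall>n. X n \<in> {prob A | A. A \<in> events}" and lim: "X \<longlonglongrightarrow> l"
  have Xb: "0 \<le> X n \<and> X n \<le> 1" for n
  proof -
    obtain A where "X n = prob A" "A \<in> events" using X by blast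
    then show ?thesis by auto
  qed
  have l0: "0 \<le> l" by (rule LIMSEQ_le_const[OF lim]) (use Xb in blast)
  have l1: "l \<le> 1" by (rule LIMSEQ_le_const2[OF lim]) (use Xb in blast)
  obtain A1 where A1: "A1 \<in> events" "prob A1 \<le> l" and A1m: "\<And>A'. A' \<in> events \<Longrightarrow> prob A' \<le> l \<Longrightarrow> prob A' \<le> prob A1"
    using sup_attained[OF l0] by blast
  obtain A2 where A2: "A2 \<in> events" "prob A2 \<le> 1 - l" and A2m: "\<And>A'. A' \<in> events \<Longrightarrow> prob A' \<le> 1 - l \<Longrightarrow> prob A' \<le> prob A2"
    using sup_attained[of "1 - l"] l1 by auto
  define A3 where "A3 = space M - A2"
  have A3: "A3 \<in> events" "prob A3 = 1 - prob A2" unfolding A3_def using A2 prob_compl by auto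
  have A3m: "prob A3 \<le> prob A'" if "A' \<in> events" "l \<le> prob A'" for A'
  proof -
    have "prob (space M - A') = 1 - prob A'" using that prob_compl by auto
    moreover have "space M - A' \<in> events" using that by auto
    ultimately have "prob (space M - A') \<le> prob A2" using that by (intro A2m) auto
    then show ?thesis using A3 \<open>prob (space M - A') = 1 - prob A'\<close> by simp
  qed
  show "l \<in> {prob A | A. A \<in> events}"
  proof (rule ccontr)
    assume nl: "l \<notin> {prob A | A. A \<in> events}"
    have d1: "prob A1 < l" using A1 nl by (cases "prob A1 = l") auto
    have "l \<le> prob A3" using A3 A2 by simp
    then have d2: "l < prob A3" using A3 nl by (cases "prob A3 = l") auto
    define d where "d = min (l - prob A1) (prob A3 - l)"
    have "d > 0" unfolding d_def using d1 d2 by auto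
    then obtain n0 where n0: "\<And>n. n \<ge> n0 \<Longrightarrow> norm (X n - l) < d" using LIMSEQ_D[OF lim] by blast
    obtain A where A: "A \<in> events" "X n0 = prob A" using X by blast
    have "norm (X n0 - l) < d" using n0 by simp
    moreover have "norm (X n0 - l) \<ge> d"
    proof (cases "prob A \<le> l")
      case True then have "prob A \<le> prob A1" using A1m A by blast
      then show ?thesis using A unfolding d_def by auto
    next
      case False then have "prob A3 \<le> prob A" using A3m A by auto
      then show ?thesis using A unfolding d_def by auto
    qed
    ultimately show False by simp
  qed
qed

end

lemma range_closed:
  assumes "prob_space Q"
  shows "closed {measure Q A | A. A \<in> sets Q}"
  using prob_space.range_closed'[OF assms] .



lemma probsD:
  assumes "Q \<in> probs M"
  shows "sets Q = sets M" "prob_space Q" "absolutely_continuous M Q" "space Q = space M"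
  using assms sets_eq_imp_space_eq[of Q M] unfolding probs_def by auto

lemma tv_formula:
  assumes M: "sigma_finite_measure M" and Q: "Q \<in> probs M" and P: "P \<in> probs M"
    and ac: "absolutely_continuous Q P"
  shows "tvd M P Q = enn2real (\<integral>\<^sup>+ x. ennreal \<bar>enn2real (RN_deriv Q P x) - 1\<bar> \<partial>Q)"
proof -
  interpret M: sigma_finite_measure M by fact
  note sQ = probsD[OF Q] and sP = probsD[OF P]
  interpret Q: prob_space Q by (rule sQ(2))
  interpret P: prob_space P by (rule sP(2))
  have sfQ: "sigma_finite_measure Q" by unfold_locales
  have sfP: "sigma_finite_measure P" by unfold_locales
  define q where "q = RN_deriv M Q"
  define R where "R = RN_deriv Q P"
  have qm: "q \<in> borel_measurable M" unfolding q_def by simp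
  have Rm: "R \<in> borel_measurable M" unfolding R_def by (subst measurable_cong_sets[OF sQ(1)[symmetric] refl]) simp
  have RmQ: "R \<in> borel_measurable Q" unfolding R_def by simp
  have Qd: "density M q = Q" unfolding q_def by (rule M.density_RN_deriv[OF sQ(3) sQ(1)])
  have Pd: "density Q R = P" unfolding R_def using sP(1) sQ(1) by (intro Q.density_RN_deriv[OF ac]) auto
  have PdM: "density M (\<lambda>x. q x * R x) = P"
    using Pd Qd density_density_eq[OF qm Rm] by simp
  have AE1: "AE x in M. q x * R x = RN_deriv M P x"
    by (rule M.RN_deriv_unique[OF _ PdM]) (use qm Rm in measurable)
  have AE2: "AE x in M. q x \<noteq> \<infinity>"
    unfolding q_def by (rule M.RN_deriv_finite[OF sfQ sQ(3) sQ(1)])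
  have "(\<integral>\<^sup>+ x. ennreal \<bar>dens M P x - dens M Q x\<bar> \<partial>M) = (\<integral>\<^sup>+ x. q x * ennreal \<bar>enn2real (R x) - 1\<bar> \<partial>M)"
  proof (rule nn_integral_cong_AE)
    show "AE x in M. ennreal \<bar>dens M P x - dens M Q x\<bar> = q x * ennreal \<bar>enn2real (R x) - 1\<bar>"
      using AE1 AE2
    proof eventually_elim
      case (elim x)
      have "dens M P x = enn2real (q x) * enn2real (R x)"
        unfolding dens_def elim(1)[symmetric] by (simp add: enn2real_mult)
      moreover have "dens M Q x = enn2real (q x)" unfolding dens_def q_def by simp
      moreover have "enn2real (q x) * enn2real (R x) - enn2real (q x) = enn2real (q x) * (enn2real (R x) - 1)"
        by (simp add: algebra_simps)
      ultimately have "\<bar>dens M P x - dens M Q x\<bar> = enn2real (q x) * \<bar>enn2real (R x) - 1\<bar>"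
        by (simp add: abs_mult)
      then show ?case using elim(2) by (simp add: ennreal_mult' less_top)
    qed
  qed
  also have "\<dots> = (\<integral>\<^sup>+ x. ennreal \<bar>enn2real (R x) - 1\<bar> \<partial>density M q)"
    by (rule nn_integral_density[symmetric]) (use qm Rm in measurable)
  finally show ?thesis unfolding tvd_def Qd R_def by simp
qed

lemma KL_int:
  assumes "integrable N f"
  shows "enn2ereal (\<integral>\<^sup>+x. ennreal (f x) \<partial>N) - enn2ereal (\<integral>\<^sup>+x. ennreal (- f x) \<partial>N) = ereal (\<integral>x. f x \<partial>N)"
proof -
  obtain r q where "0 \<le> r" "0 \<le> q" "(\<integral>\<^sup>+x. ennreal (f x)\<partial>N) = ennreal r"
    "(\<integral>\<^sup>+x. ennreal (-f x)\<partial>N) = ennreal q" "integral\<^sup>L N f = r - q"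
    using integrableE[OF assms] by metis
  then show ?thesis by simp
qed

lemma int_if:
  assumes "prob_space Q" "A \<in> sets Q"
  shows "integrable Q (\<lambda>x. if x \<in> A then u else w)"
    "(\<integral>x. (if x \<in> A then u else w) \<partial>Q) = u * measure Q A + w * (1 - measure Q A)"
proof -
  interpret Q: prob_space Q by fact
  have eq: "\<And>x. x \<in> space Q \<Longrightarrow> (if x \<in> A then u else w) = u * indicator A x + w * indicator (space Q - A) x"
    by (auto simp: indicator_def)
  have i1: "integrable Q (\<lambda>x. u * indicator A x + w * indicator (space Q - A) x)"
    using assms(2) by (intro Bochner_Integration.integrable_add) (auto intro!: integrable_real_indicator simp: less_top[symmetric])
  then show "integrable Q (\<lambda>x. if x \<in> A then u else w)"
    using eq by (subst Bochner_Integration.integrable_cong[OF refl eq]) auto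
  have "(\<integral>x. (if x \<in> A then u else w) \<partial>Q) = (\<integral>x. u * indicator A x + w * indicator (space Q - A) x \<partial>Q)"
    by (rule Bochner_Integration.integral_cong[OF refl eq])
  also have "\<dots> = u * measure Q A + w * measure Q (space Q - A)"
    using assms(2) sets.sets_into_space[OF assms(2)]
    by (subst Bochner_Integration.integral_add) (auto intro!: integrable_real_indicator simp: less_top[symmetric] Int_absorb2 Int_commute)
  also have "measure Q (space Q - A) = 1 - measure Q A" using Q.prob_compl[OF assms(2)] by simp
  finally show "(\<integral>x. (if x \<in> A then u else w) \<partial>Q) = u * measure Q A + w * (1 - measure Q A)" .
qed

definition dd :: "real \<Rightarrow> real \<Rightarrow> ereal" where
  "dd b a = (if 0 < a \<and> a < 1 then ereal (b * ln (b/a) + (1-b) * ln ((1-b)/(1-a))) else \<infinity>)"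

lemma lift:
  assumes M: "sigma_finite_measure M" and Q: "Q \<in> probs M" and A: "A \<in> sets M"
    and a: "0 < measure Q A" "measure Q A < 1" and b: "0 \<le> b" "b \<le> 1"
  shows "\<exists>P\<in>probs M. tvd M P Q = 2 * \<bar>b - measure Q A\<bar> \<and> KL P Q = dd b (measure Q A)"
proof -
  note sQ = probsD[OF Q]
  interpret Q: prob_space Q by (rule sQ(2))
  define a where "a = measure Q A"
  have a0: "0 < a" "a < 1" using a unfolding a_def by auto
  have AQ: "A \<in> sets Q" using A sQ by simp
  define gr where "gr x = (if x \<in> A then b/a else (1-b)/(1-a))" for x
  have gr0: "0 \<le> gr x" for x unfolding gr_def using a0 b by auto
  have grm: "gr \<in> borel_measurable Q" unfolding gr_def using AQ by measurable
  define P where "P = density Q (\<lambda>x. ennreal (gr x))"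
  have sP: "sets P = sets M" unfolding P_def using sQ by simp
  have sPQ: "sets P = sets Q" unfolding P_def by simp
  have igr0: "integrable Q gr" "(\<integral>x. gr x \<partial>Q) = (b/a) * a + ((1-b)/(1-a)) * (1 - a)"
    using int_if[OF sQ(2) AQ, of "b/a" "(1-b)/(1-a)"] unfolding gr_def[abs_def] a_def[symmetric] by auto
  have "(b/a) * a + ((1-b)/(1-a)) * (1 - a) = 1" using a0 by simp
  then have igr: "integrable Q gr" "(\<integral>x. gr x \<partial>Q) = 1" using igr0 by auto
  have pP: "prob_space P"
  proof
    have "emeasure P (space P) = (\<integral>\<^sup>+ x. ennreal (gr x) \<partial>Q)"
      unfolding P_def using grm by (subst emeasure_density) (auto intro!: nn_integral_cong simp: indicator_def)
    also have "\<dots> = ennreal (\<integral>x. gr x \<partial>Q)"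
      using igr gr0 by (intro nn_integral_eq_integral) auto
    finally show "emeasure P (space P) = 1" using igr by simp
  qed
  have acQP: "absolutely_continuous Q P" unfolding P_def using grm by (intro absolutely_continuousI_density) measurable
  have acMP: "absolutely_continuous M P"
    using sQ(3) acQP sQ(1) sP unfolding absolutely_continuous_def null_sets_def by auto
  have Pp: "P \<in> probs M" unfolding probs_def using sP pP acMP by auto
  have AEQ: "AE x in Q. ennreal (gr x) = RN_deriv Q P x"
    by (rule Q.RN_deriv_unique) (use grm in \<open>auto simp: P_def\<close>)
  then have AEQ': "AE x in Q. enn2real (RN_deriv Q P x) = gr x"
    by eventually_elim (use gr0 in \<open>metis enn2real_ennreal\<close>)
  have AEP': "AE x in P. enn2real (RN_deriv Q P x) = gr x"
    by (rule absolutely_continuous_AE[OF sPQ acQP AEQ'])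
  define h where "h x = gr x * ln (gr x)" for x
  have hm: "h \<in> borel_measurable Q" unfolding h_def using grm by measurable
  have h_if: "h x = (if x \<in> A then (b/a) * ln (b/a) else ((1-b)/(1-a)) * ln ((1-b)/(1-a)))" for x
    unfolding h_def gr_def by simp
  have ih0: "integrable Q h" "(\<integral>x. h x \<partial>Q) = ((b/a) * ln (b/a)) * a + (((1-b)/(1-a)) * ln ((1-b)/(1-a))) * (1 - a)"
    using int_if[OF sQ(2) AQ, of "(b/a) * ln (b/a)" "((1-b)/(1-a)) * ln ((1-b)/(1-a))"]
    unfolding h_if[abs_def] a_def[symmetric] by auto
  have "((b/a) * ln (b/a)) * a = b * ln (b/a)" using a0 by simp
  moreover have "(((1-b)/(1-a)) * ln ((1-b)/(1-a))) * (1 - a) = (1-b) * ln ((1-b)/(1-a))" using a0 by simp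
  ultimately have ih: "integrable Q h" "(\<integral>x. h x \<partial>Q) = b * ln (b/a) + (1-b) * ln ((1-b)/(1-a))"
    using ih0 by auto
  have pos: "(\<integral>\<^sup>+ x. ennreal (ln (enn2real (RN_deriv Q P x))) \<partial>P) = (\<integral>\<^sup>+ x. ennreal (h x) \<partial>Q)"
  proof -
    have "(\<integral>\<^sup>+ x. ennreal (ln (enn2real (RN_deriv Q P x))) \<partial>P) = (\<integral>\<^sup>+ x. ennreal (ln (gr x)) \<partial>P)"
      by (rule nn_integral_cong_AE) (use AEP' in auto)
    also have "\<dots> = (\<integral>\<^sup>+ x. ennreal (gr x) * ennreal (ln (gr x)) \<partial>Q)"
      unfolding P_def by (rule nn_integral_density) (use grm in measurable)
    also have "\<dots> = (\<integral>\<^sup>+ x. ennreal (h x) \<partial>Q)"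
      unfolding h_def using gr0 by (simp add: ennreal_mult')
    finally show ?thesis .
  qed
  have neg: "(\<integral>\<^sup>+ x. ennreal (- ln (enn2real (RN_deriv Q P x))) \<partial>P) = (\<integral>\<^sup>+ x. ennreal (- h x) \<partial>Q)"
  proof -
    have "(\<integral>\<^sup>+ x. ennreal (- ln (enn2real (RN_deriv Q P x))) \<partial>P) = (\<integral>\<^sup>+ x. ennreal (- ln (gr x)) \<partial>P)"
      by (rule nn_integral_cong_AE) (use AEP' in auto)
    also have "\<dots> = (\<integral>\<^sup>+ x. ennreal (gr x) * ennreal (- ln (gr x)) \<partial>Q)"
      unfolding P_def by (rule nn_integral_density) (use grm in measurable)
    also have "\<dots> = (\<integral>\<^sup>+ x. ennreal (- h x) \<partial>Q)"
      unfolding h_def using gr0 by (simp add: ennreal_mult'[symmetric])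
    finally show ?thesis .
  qed
  have KLe: "KL P Q = dd b a"
    unfolding KL_def using acQP pos neg KL_int[OF ih(1)] ih(2) a0 by (simp add: dd_def)
  have tv: "tvd M P Q = enn2real (\<integral>\<^sup>+ x. ennreal \<bar>enn2real (RN_deriv Q P x) - 1\<bar> \<partial>Q)"
    by (rule tv_formula[OF M Q Pp acQP])
  also have "\<dots> = enn2real (\<integral>\<^sup>+ x. ennreal \<bar>gr x - 1\<bar> \<partial>Q)"
    by (intro arg_cong[where f=enn2real] nn_integral_cong_AE) (use AEQ' in auto)
  also have "\<dots> = (\<integral>x. \<bar>gr x - 1\<bar> \<partial>Q)"
    by (rule enn2real_nn_integral_eq_integral) (use grm in auto)
  also have "\<dots> = 2 * \<bar>b - a\<bar>"
  proof -
    have e: "\<bar>gr x - 1\<bar> = (if x \<in> A then \<bar>b/a - 1\<bar> else \<bar>(1-b)/(1-a) - 1\<bar>)" for x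
      unfolding gr_def by simp
    have e1: "\<bar>b/a - 1\<bar> * a = \<bar>b - a\<bar>"
    proof -
      have "b/a - 1 = (b - a) / a" using a0 by (simp add: field_simps)
      then show ?thesis using a0 by (simp add: abs_div)
    qed
    have e2: "\<bar>(1-b)/(1-a) - 1\<bar> * (1-a) = \<bar>b - a\<bar>"
    proof -
      have "(1-b)/(1-a) - 1 = (a - b) / (1 - a)" using a0 by (simp add: field_simps)
      then show ?thesis using a0 by (simp add: abs_div abs_minus_commute)
    qed
    show ?thesis unfolding e int_if(2)[OF sQ(2) AQ] a_def[symmetric] e1 e2 by simp
  qed
  finally show ?thesis using Pp KLe unfolding a_def by blast
qed

lemma xl_ge0: "0 \<le> (t::real) \<Longrightarrow> t * ln t \<ge> t - 1"
proof (cases "t = 0")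
  case False
  assume "0 \<le> t" then have t: "t > 0" using False by auto
  have "ln (1/t) \<le> 1/t - 1" using t by (intro ln_le_minus_one) auto
  then have "- ln t \<le> 1/t - 1" using t by (simp add: ln_div)
  then have "t * (- ln t) \<le> t * (1/t - 1)" using t by (intro mult_left_mono) auto
  then show ?thesis using t by (simp add: algebra_simps)
qed simp

lemma rlnr_ge: "0 \<le> (r::real) \<Longrightarrow> 0 < c \<Longrightarrow> r * ln c + r - c \<le> r * ln r"
proof (cases "r = 0")
  case False
  assume r: "0 \<le> r" and c: "0 < c"
  then have r0: "r > 0" using False by auto
  have "ln (c / r) \<le> c / r - 1" using r0 c by (intro ln_le_minus_one) auto
  then have "ln c - ln r \<le> c / r - 1" using r0 c by (simp add: ln_div)
  then have "r * (ln c - ln r) \<le> r * (c / r - 1)" using r0 by (intro mult_left_mono) auto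
  then show ?thesis using r0 by (simp add: algebra_simps)
qed simp

lemma logsum:
  assumes Q: "prob_space Q" and rm: "r \<in> borel_measurable Q" and r0: "\<And>x. 0 \<le> r x"
    and ir: "integrable Q r" and irl: "integrable Q (\<lambda>x. r x * ln (r x))"
    and B: "B \<in> sets Q" and qB: "measure Q B > 0"
  shows "(\<integral>x. r x * indicator B x \<partial>Q) * ln ((\<integral>x. r x * indicator B x \<partial>Q) / measure Q B)
          \<le> (\<integral>x. indicator B x * (r x * ln (r x)) \<partial>Q)"
proof -
  interpret Q: prob_space Q by fact
  define pB where "pB = (\<integral>x. r x * indicator B x \<partial>Q)"
  have irB: "integrable Q (\<lambda>x. r x * indicator B x)"
    using integrable_mult_indicator[OF B ir] by (simp add: mult.commute)
  have iB: "integrable Q (\<lambda>x. indicator B x :: real)" using B by (auto simp: less_top[symmetric])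
  have irlB: "integrable Q (\<lambda>x. indicator B x * (r x * ln (r x)))"
    using integrable_mult_indicator[OF B irl] by simp
  have pB0: "0 \<le> pB" unfolding pB_def using r0 by (intro integral_nonneg_AE) auto
  show ?thesis
  proof (cases "pB = 0")
    case True
    have "AE x in Q. r x * indicator B x = 0"
      using integral_nonneg_eq_0_iff_AE[OF irB] True r0 unfolding pB_def by auto
    then have "AE x in Q. indicator B x * (r x * ln (r x)) = 0"
      by eventually_elim (auto simp: indicator_def)
    then have "(\<integral>x. indicator B x * (r x * ln (r x)) \<partial>Q) = (\<integral>x. 0 \<partial>Q)"
      by (intro integral_cong_AE) (use rm B in measurable)
    then show ?thesis using True unfolding pB_def by simp
  next
    case False
    define c where "c = pB / measure Q B"
    have c0: "c > 0" unfolding c_def using False pB0 qB by auto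
    have "(\<integral>x. indicator B x * (r x * ln c + r x - c) \<partial>Q) \<le> (\<integral>x. indicator B x * (r x * ln (r x)) \<partial>Q)"
    proof (rule integral_mono)
      show "integrable Q (\<lambda>x. indicator B x * (r x * ln c + r x - c))"
      proof -
        have "integrable Q (\<lambda>x. r x * ln c + r x - c)"
          by (intro Bochner_Integration.integrable_diff Bochner_Integration.integrable_add integrable_mult_left ir) auto
        from integrable_mult_indicator[OF B this] show ?thesis by simp
      qed
      show "integrable Q (\<lambda>x. indicator B x * (r x * ln (r x)))" by (rule irlB)
      fix x show "indicator B x * (r x * ln c + r x - c) \<le> indicator B x * (r x * ln (r x))"
        using rlnr_ge[OF r0 c0, of x] by (auto simp: indicator_def)
    qed
    moreover have "(\<integral>x. indicator B x * (r x * ln c + r x - c) \<partial>Q) = pB * ln c"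
    proof -
      have eq: "(\<lambda>x. indicator B x * (r x * ln c + r x - c)) =
          (\<lambda>x. (ln c + 1) * (r x * indicator B x) - c * indicator B x)"
        by (rule ext) (simp add: algebra_simps)
      have "(\<integral>x. indicator B x * (r x * ln c + r x - c) \<partial>Q) = (ln c + 1) * pB - c * measure Q B"
        unfolding eq pB_def using irB iB B by (simp add: Int_absorb2 sets.sets_into_space)
      also have "\<dots> = pB * ln c" unfolding c_def using qB by (simp add: algebra_simps)
      finally show ?thesis .
    qed
    ultimately have "pB * ln (pB / measure Q B) \<le> (\<integral>x. indicator B x * (r x * ln (r x)) \<partial>Q)"
      unfolding c_def by simp
    then show ?thesis unfolding pB_def .
  qed
qed

lemma lower:
  assumes M: "sigma_finite_measure M" and Q: "Q \<in> probs M" and P: "P \<in> probs M"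
    and v: "v > 0" "v \<le> tvd M P Q" and fin: "KL P Q \<noteq> \<infinity>"
  shows "\<exists>A\<in>sets M. 0 < measure Q A \<and> measure Q A < 1 \<and>
     (\<exists>b. 0 \<le> b \<and> b \<le> 1 \<and> v \<le> 2*\<bar>b - measure Q A\<bar> \<and> dd b (measure Q A) \<le> KL P Q)"
proof -
  note sQ = probsD[OF Q] and sP = probsD[OF P]
  interpret Q: prob_space Q by (rule sQ(2))
  interpret P: prob_space P by (rule sP(2))
  have sfP: "sigma_finite_measure P" by unfold_locales
  have sPQ: "sets P = sets Q" using sP sQ by simp
  have ac: "absolutely_continuous Q P" using fin unfolding KL_def by (auto split: if_splits)
  define r where "r x = enn2real (RN_deriv Q P x)" for x
  have rm: "r \<in> borel_measurable Q" unfolding r_def by simp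
  have r0: "0 \<le> r x" for x unfolding r_def by simp
  have AEfin: "AE x in Q. RN_deriv Q P x \<noteq> \<infinity>" by (rule Q.RN_deriv_finite[OF sfP ac sPQ])
  have Pd: "density Q (RN_deriv Q P) = P" by (rule Q.density_RN_deriv[OF ac sPQ])
  have Pdr: "density Q (\<lambda>x. ennreal (r x)) = P"
  proof -
    have "density Q (\<lambda>x. ennreal (r x)) = density Q (RN_deriv Q P)"
      by (rule density_cong) (use rm AEfin in \<open>auto simp: r_def less_top\<close>)
    then show ?thesis using Pd by simp
  qed
  have mP: "measure P B = (\<integral>x. r x * indicator B x \<partial>Q)" if B: "B \<in> sets Q" for B
  proof -
    have "emeasure P B = (\<integral>\<^sup>+ x. ennreal (r x) * indicator B x \<partial>Q)"
      unfolding Pdr[symmetric] using B rm by (simp add: emeasure_density)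
    also have "\<dots> = (\<integral>\<^sup>+ x. ennreal (r x * indicator B x) \<partial>Q)"
      by (intro nn_integral_cong) (auto simp: indicator_def)
    finally have "measure P B = enn2real (\<integral>\<^sup>+ x. ennreal (r x * indicator B x) \<partial>Q)"
      unfolding measure_def by simp
    also have "\<dots> = (\<integral>x. r x * indicator B x \<partial>Q)"
      by (rule enn2real_nn_integral_eq_integral) (use rm B r0 in auto)
    finally show ?thesis .
  qed
  have ir: "integrable Q r"
  proof (rule integrableI_nonneg)
    have "(\<integral>\<^sup>+ x. ennreal (r x) \<partial>Q) = emeasure P (space P)"
      unfolding Pdr[symmetric] using rm by (subst emeasure_density) (auto intro!: nn_integral_cong simp: indicator_def)
    then show "(\<integral>\<^sup>+ x. ennreal (r x) \<partial>Q) < \<infinity>" using P.emeasure_space_1 by simp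
  qed (use rm r0 in auto)
  have intr: "(\<integral>x. r x \<partial>Q) = 1"
  proof -
    have "(\<integral>x. r x \<partial>Q) = (\<integral>x. r x * indicator (space Q) x \<partial>Q)"
      by (intro Bochner_Integration.integral_cong) auto
    also have "\<dots> = measure P (space Q)" using mP[of "space Q"] by simp
    also have "\<dots> = 1" using sPQ sets_eq_imp_space_eq[OF sPQ] P.prob_space by simp
    finally show ?thesis .
  qed
  have tv: "tvd M P Q = (\<integral>x. \<bar>r x - 1\<bar> \<partial>Q)"
    unfolding tv_formula[OF M Q P ac] r_def[symmetric]
    by (rule enn2real_nn_integral_eq_integral) (use rm in auto)
  define A where "A = {x \<in> space Q. r x > 1}"
  have AQ: "A \<in> sets Q" unfolding A_def using rm by measurable
  have AM: "A \<in> sets M" using AQ sQ by simp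
  define a where "a = measure Q A"
  define b where "b = measure P A"
  have bint: "b = (\<integral>x. r x * indicator A x \<partial>Q)" unfolding b_def by (rule mP[OF AQ])
  have irA: "integrable Q (\<lambda>x. r x * indicator A x)"
    using integrable_mult_indicator[OF AQ ir] by (simp add: mult.commute)
  have iA: "integrable Q (\<lambda>x. indicator A x :: real)" using AQ by (auto simp: less_top[symmetric])
  have tvab: "tvd M P Q = 2 * (b - a)"
  proof -
    have eq: "\<bar>r x - 1\<bar> = 2 * (r x * indicator A x) - 2 * indicator A x - (r x - 1)" if "x \<in> space Q" for x
      using that unfolding A_def by (auto simp: indicator_def)
    have "(\<integral>x. \<bar>r x - 1\<bar> \<partial>Q) = (\<integral>x. 2 * (r x * indicator A x) - 2 * indicator A x - (r x - 1) \<partial>Q)"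
      by (rule Bochner_Integration.integral_cong[OF refl eq])
    also have "\<dots> = 2 * b - 2 * a - (1 - 1)"
      using irA iA ir intr AQ Q.prob_space unfolding bint a_def
      by (simp add: Int_absorb2 sets.sets_into_space)
    finally show ?thesis using tv by simp
  qed
  have ba: "v/2 \<le> b - a" using v tvab by simp
  have b1: "b \<le> 1" "0 \<le> b" unfolding b_def by auto
  have a0: "0 < a"
  proof (rule ccontr)
    assume "\<not> 0 < a"
    then have "a = 0" unfolding a_def using measure_nonneg[of Q A] by linarith
    then have "A \<in> null_sets Q" using AQ unfolding a_def by (simp add: Q.emeasure_eq_measure null_sets_def)
    then have "A \<in> null_sets P" using ac unfolding absolutely_continuous_def by auto
    then have "b = 0" unfolding b_def by (simp add: null_sets_def measure_def)
    then show False using ba v \<open>a = 0\<close> by simp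
  qed
  have a1: "a < 1" using ba b1 v by simp
  define I1 where "I1 = (\<integral>\<^sup>+ x. ennreal (ln (r x)) \<partial>P)"
  define I2 where "I2 = (\<integral>\<^sup>+ x. ennreal (- ln (r x)) \<partial>P)"
  have KLI: "KL P Q = enn2ereal I1 - enn2ereal I2" unfolding KL_def I1_def I2_def r_def using ac by simp
  have I2fin: "I2 \<noteq> \<infinity>"
  proof -
    have "I2 = (\<integral>\<^sup>+ x. ennreal (r x) * ennreal (- ln (r x)) \<partial>Q)"
      unfolding I2_def Pdr[symmetric] by (rule nn_integral_density) (use rm in measurable)
    also have "\<dots> \<le> (\<integral>\<^sup>+ x. 1 \<partial>Q)"
    proof (rule nn_integral_mono)
      fix x
      have "r x * ln (r x) \<ge> r x - 1" by (rule xl_ge0[OF r0])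
      then have "r x * (- ln (r x)) \<le> 1" using r0[of x] by (simp add: algebra_simps)
      then have le1: "ennreal (r x * (- ln (r x))) \<le> 1" by (simp add: ennreal_le_1)
      have e: "ennreal (r x) * ennreal (- ln (r x)) = ennreal (r x * (- ln (r x)))"
        by (rule ennreal_mult'[OF r0[of x], symmetric])
      show "ennreal (r x) * ennreal (- ln (r x)) \<le> 1" unfolding e by (rule le1)
    qed
    also have "\<dots> = 1" using Q.emeasure_space_1 by simp
    finally show ?thesis by (auto simp: top_unique)
  qed
  have I1fin: "I1 \<noteq> \<infinity>"
  proof
    assume "I1 = \<infinity>"
    then have "KL P Q = \<infinity>" using KLI I2fin by (simp add: less_top ennreal_minus_eq_top)
    then show False using fin by simp
  qed
  have rmP: "r \<in> borel_measurable P" unfolding r_def by (subst measurable_cong_sets[OF sPQ refl]) simp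
  have ilnP: "integrable P (\<lambda>x. ln (r x))"
    unfolding real_integrable_def using I1fin I2fin rmP unfolding I1_def I2_def by auto
  have KLe: "KL P Q = ereal (\<integral>x. ln (r x) \<partial>P)" unfolding KLI I1_def I2_def by (rule KL_int[OF ilnP])
  have irl: "integrable Q (\<lambda>x. r x * ln (r x))"
    using ilnP unfolding Pdr[symmetric] by (subst (asm) integrable_density) (use rm r0 in auto)
  have lnPQ: "(\<integral>x. ln (r x) \<partial>P) = (\<integral>x. r x * ln (r x) \<partial>Q)"
    unfolding Pdr[symmetric] by (subst integral_density) (use rm r0 in auto)
  have Ac: "space Q - A \<in> sets Q" using AQ by auto
  have qAc: "measure Q (space Q - A) = 1 - a" unfolding a_def using Q.prob_compl[OF AQ] by simp
  have pAc: "measure P (space Q - A) = 1 - b"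
    unfolding b_def using P.prob_compl[of A] AQ sPQ sets_eq_imp_space_eq[OF sPQ] by simp
  have L1: "b * ln (b / a) \<le> (\<integral>x. indicator A x * (r x * ln (r x)) \<partial>Q)"
    using logsum[OF sQ(2) rm r0 ir irl AQ] a0 unfolding a_def[symmetric] bint by simp
  have L2: "(1 - b) * ln ((1 - b) / (1 - a)) \<le> (\<integral>x. indicator (space Q - A) x * (r x * ln (r x)) \<partial>Q)"
    using logsum[OF sQ(2) rm r0 ir irl Ac] a1 qAc mP[OF Ac] pAc by simp
  have split: "(\<integral>x. r x * ln (r x) \<partial>Q) = (\<integral>x. indicator A x * (r x * ln (r x)) \<partial>Q) +
      (\<integral>x. indicator (space Q - A) x * (r x * ln (r x)) \<partial>Q)"
  proof -
    have "(\<integral>x. r x * ln (r x) \<partial>Q) = (\<integral>x. indicator A x * (r x * ln (r x)) + indicator (space Q - A) x * (r x * ln (r x)) \<partial>Q)"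
      by (intro Bochner_Integration.integral_cong) (auto simp: indicator_def)
    also have "\<dots> = (\<integral>x. indicator A x * (r x * ln (r x)) \<partial>Q) + (\<integral>x. indicator (space Q - A) x * (r x * ln (r x)) \<partial>Q)"
      using integrable_mult_indicator[OF AQ irl] integrable_mult_indicator[OF Ac irl]
      by (intro Bochner_Integration.integral_add) auto
    finally show ?thesis .
  qed
  have "dd b a \<le> KL P Q"
    unfolding KLe lnPQ dd_def using a0 a1 L1 L2 split by simp
  moreover have "v \<le> 2 * \<bar>b - a\<bar>"
  proof -
    have "b - a > 0" using ba v by linarith
    then have abseq: "\<bar>b - a\<bar> = b - a" by simp
    show ?thesis unfolding abseq using ba by (simp add: field_simps)
  qed
  ultimately show ?thesis using AM a0 a1 b1 unfolding a_def by blast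
qed



definition G :: "real \<Rightarrow> real \<Rightarrow> ereal" where
  "G v a = Inf {dd b a | b. 0 \<le> b \<and> b \<le> 1 \<and> v \<le> 2 * \<bar>b - a\<bar>}"

lemma xl_cont: "continuous_on {0..} (\<lambda>t::real. t * ln t)"
  unfolding continuous_on_def
proof
  fix x :: real assume x: "x \<in> {0..}"
  show "((\<lambda>t. t * ln t) \<longlongrightarrow> x * ln x) (at x within {0..})"
  proof (cases "x = 0")
    case True
    have "((\<lambda>t::real. t * ln t) \<longlongrightarrow> 0) (at_right 0)" by real_asymp
    then show ?thesis using True by (simp add: at_within_Ici_at_right)
  next
    case False
    then have "x > 0" using x by auto
    then have "isCont (\<lambda>t. t * ln t) x" by (intro continuous_intros) auto
    then show ?thesis by (metis isCont_def tendsto_within_subset subset_UNIV)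
  qed
qed

lemma xl_ge: "0 \<le> (t::real) \<Longrightarrow> t * ln t \<ge> t - 1"
proof (cases "t = 0")
  case False
  assume "0 \<le> t" then have t: "t > 0" using False by auto
  have "ln (1/t) \<le> 1/t - 1" using t by (intro ln_le_minus_one) auto
  then have "- ln t \<le> 1/t - 1" using t by (simp add: ln_div)
  then have "t * (- ln t) \<le> t * (1/t - 1)" using t by (intro mult_left_mono) auto
  then show ?thesis using t by (simp add: algebra_simps)
qed simp

definition F :: "real \<Rightarrow> real \<Rightarrow> real" where
  "F b a = b * ln (b/a) + (1-b) * ln ((1-b)/(1-a))"

lemma F_alt:
  assumes "0 < a" "a < 1" "0 \<le> b" "b \<le> 1"
  shows "F b a = b * ln b - b * ln a + (1-b) * ln (1-b) - (1-b) * ln (1-a)"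
proof -
  have 1: "b * ln (b/a) = b * ln b - b * ln a"
    using assms by (cases "b = 0") (auto simp: ln_div algebra_simps)
  have 2: "(1-b) * ln ((1-b)/(1-a)) = (1-b) * ln (1-b) - (1-b) * ln (1-a)"
    using assms by (cases "b = 1") (auto simp: ln_div algebra_simps)
  show ?thesis unfolding F_def 1 2 by simp
qed

lemma F_lb:
  assumes "0 < a" "a < 1" "0 \<le> b" "b \<le> 1"
  shows "F b a \<ge> - (b * ln a) - 1" "F b a \<ge> - ((1-b) * ln (1-a)) - 1"
proof -
  have x1: "b * ln b \<ge> b - 1" and x2: "(1-b) * ln (1-b) \<ge> (1-b) - 1"
    using assms xl_ge[of b] xl_ge[of "1-b"] by auto
  have l1: "b * ln a \<le> 0" using assms by (auto intro!: mult_nonneg_nonpos)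
  have "ln (1-a) \<le> 0" using assms by auto
  then have l2: "(1-b) * ln (1-a) \<le> 0" using assms by (auto intro!: mult_nonneg_nonpos)
  have e: "F b a = b * ln b - b * ln a + (1-b) * ln (1-b) - (1-b) * ln (1-a)" by (rule F_alt[OF assms])
  show "F b a \<ge> - (b * ln a) - 1" "F b a \<ge> - ((1-b) * ln (1-a)) - 1"
    unfolding e using x1 x2 l1 l2 by linarith+
qed

lemma F_cont:
  assumes "0 < e" "e < 1/2"
  shows "continuous_on {(a,b). e \<le> a \<and> a \<le> 1 - e \<and> 0 \<le> b \<and> b \<le> 1} (\<lambda>(a,b). F b a)"
proof -
  let ?S = "{(a::real,b::real). e \<le> a \<and> a \<le> 1 - e \<and> 0 \<le> b \<and> b \<le> 1}"
  have eq: "\<And>p. p \<in> ?S \<Longrightarrow> (\<lambda>(a,b). F b a) p =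
     (\<lambda>p. (snd p) * ln (snd p) - snd p * ln (fst p) + (1 - snd p) * ln (1 - snd p)
            - (1 - snd p) * ln (1 - fst p)) p"
    using assms by (auto simp: F_alt)
  have c1: "continuous_on ?S (\<lambda>p. (snd p) * ln (snd p))"
    by (rule continuous_on_compose2[OF xl_cont, of _ snd]) (auto intro!: continuous_intros)
  have c2: "continuous_on ?S (\<lambda>p. (1 - snd p) * ln (1 - snd p))"
    by (rule continuous_on_compose2[OF xl_cont, of _ "\<lambda>p. 1 - snd p"]) (auto intro!: continuous_intros)
  have c3: "continuous_on ?S (\<lambda>p. snd p * ln (fst p))"
    using assms by (auto intro!: continuous_intros)
  have c4: "continuous_on ?S (\<lambda>p. (1 - snd p) * ln (1 - fst p))"
    using assms by (auto intro!: continuous_intros)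
  show ?thesis
    using continuous_on_diff[OF continuous_on_add[OF continuous_on_diff[OF c1 c3] c2] c4]
    by (rule continuous_on_cong[THEN iffD1, rotated -1]) (auto simp: eq)
qed

lemma G_top: assumes "\<And>b. 0 \<le> b \<Longrightarrow> b \<le> 1 \<Longrightarrow> v \<le> 2 * \<bar>b - a\<bar> \<Longrightarrow> dd b a = \<infinity>"
  shows "G v a = \<infinity>"
  unfolding G_def using assms by (intro antisym Inf_greatest) auto

lemma minimizer:
  assumes "prob_space Q" "v > 0"
  shows "\<exists>A\<in>sets Q. \<forall>A'\<in>sets Q. G v (measure Q A) \<le> G v (measure Q A')"
proof (cases "\<forall>A\<in>sets Q. \<forall>b. 0 \<le> b \<and> b \<le> 1 \<and> v \<le> 2*\<bar>b - measure Q A\<bar> \<longrightarrow> dd b (measure Q A) = \<infinity>")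
  case True
  then have "G v (measure Q A) = \<infinity>" if "A \<in> sets Q" for A
    using that by (intro G_top) auto
  then show ?thesis by (intro bexI[of _ "{}"]) auto
next
  case False
  interpret Q: prob_space Q by fact
  from False obtain A0 b0 where A0: "A0 \<in> sets Q" "0 \<le> b0" "b0 \<le> 1" "v \<le> 2*\<bar>b0 - measure Q A0\<bar>"
    "dd b0 (measure Q A0) \<noteq> \<infinity>" by blast
  define a0 where "a0 = measure Q A0"
  have a0: "0 < a0" "a0 < 1" using A0(5) unfolding a0_def by (auto simp: dd_def split: if_splits)
  define r0 where "r0 = F b0 a0"
  define \<delta> where "\<delta> = v/2"
  have dpos: "\<delta> > 0" using assms unfolding \<delta>_def by auto
  define \<eta> where "\<eta> = min (min \<delta> (1/4)) (min (min a0 (1-a0)) (exp (-(r0+1)/\<delta>) / 2))"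
  have e14: "\<eta> \<le> 1/4" unfolding \<eta>_def by (rule order.trans[OF min.cobounded1 min.cobounded2])
  have eta: "0 < \<eta>" "\<eta> \<le> \<delta>" "\<eta> < 1/2" "\<eta> \<le> a0" "\<eta> \<le> 1 - a0"
    using e14 unfolding \<eta>_def using dpos a0 by auto
  have "\<eta> \<le> exp (-(r0+1)/\<delta>) / 2" unfolding \<eta>_def by (rule order.trans[OF min.cobounded2 min.cobounded2])
  then have "\<eta> < exp (-(r0+1)/\<delta>)" using exp_gt_zero[of "-(r0+1)/\<delta>"] by linarith
  then have "ln \<eta> < -(r0+1)/\<delta>" using eta(1) by (metis ln_exp ln_less_cancel_iff exp_gt_zero)
  then have "\<delta> * ln \<eta> < \<delta> * (-(r0+1)/\<delta>)" using dpos by (intro mult_strict_left_mono) auto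
  then have eta_ln: "\<delta> * ln \<eta> < -(r0+1)" using dpos by simp
  define R where "R = {measure Q A | A. A \<in> sets Q}"
  have Rc: "closed R" unfolding R_def by (rule range_closed) fact
  define K where "K = {(a,b). a \<in> R \<and> \<eta> \<le> a \<and> a \<le> 1 - \<eta> \<and> 0 \<le> b \<and> b \<le> 1 \<and> v \<le> 2*\<bar>b-a\<bar>}"
  have KC: "K = ({0..1} \<times> {0..1}) \<inter> ((R \<times> UNIV) \<inter> ({p. \<eta> \<le> fst p} \<inter> {p. fst p \<le> 1 - \<eta>} \<inter> {p. v \<le> 2*\<bar>snd p - fst p\<bar>}))"
    unfolding K_def R_def by auto
  have "compact K" unfolding KC
    by (intro compact_Int_closed compact_Times compact_Icc closed_Int closed_Times Rc closed_UNIV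
        closed_Collect_le continuous_intros)
  have K0: "(a0, b0) \<in> K" unfolding K_def R_def a0_def using A0 eta unfolding a0_def by auto
  have KS: "K \<subseteq> {(a,b). \<eta> \<le> a \<and> a \<le> 1 - \<eta> \<and> 0 \<le> b \<and> b \<le> 1}" unfolding K_def by auto
  have cont: "continuous_on K (\<lambda>(a,b). F b a)"
    by (rule continuous_on_subset[OF F_cont KS]) (use eta in auto)
  obtain p where p: "p \<in> K" and pmin: "\<And>y. y \<in> K \<Longrightarrow> (\<lambda>(a,b). F b a) p \<le> (\<lambda>(a,b). F b a) y"
    using continuous_attains_inf[OF \<open>compact K\<close> _ cont] K0 by blast
  obtain a1 b1 where p1: "p = (a1, b1)" by (cases p)
  have K1: "a1 \<in> R" "\<eta> \<le> a1" "a1 \<le> 1 - \<eta>" "0 \<le> b1" "b1 \<le> 1" "v \<le> 2*\<bar>b1-a1\<bar>"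
    using p unfolding p1 K_def by auto
  obtain A1 where A1: "A1 \<in> sets Q" "a1 = measure Q A1" using K1(1) unfolding R_def by auto
  have Fmin: "F b1 a1 \<le> F b a" if "(a,b) \<in> K" for a b using pmin[OF that] p1 by simp
  have r0le: "F b1 a1 \<le> r0" unfolding r0_def using Fmin[OF K0] .
  have key: "ereal (F b1 a1) \<le> dd b (measure Q A)"
    if A: "A \<in> sets Q" and b: "0 \<le> b" "b \<le> 1" "v \<le> 2*\<bar>b - measure Q A\<bar>" for A b
  proof -
    define a where "a = measure Q A"
    have bb: "\<delta> \<le> \<bar>b - a\<bar>" using b unfolding a_def \<delta>_def by auto
    show ?thesis
    proof (cases "0 < a \<and> a < 1")
      case False then show ?thesis unfolding a_def[symmetric] dd_def by auto
    next
      case True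
      have dde: "dd b a = ereal (F b a)" using True by (simp add: dd_def F_def)
      consider "a < \<eta>" | "\<eta> \<le> a \<and> a \<le> 1 - \<eta>" | "1 - \<eta> < a" by linarith
      then show ?thesis
      proof cases
        case 1
        have "b \<ge> \<delta>" using bb 1 eta b True by (auto simp: abs_if split: if_splits)
        have la: "ln a < ln \<eta>" using 1 True eta by auto
        have "ln a \<le> 0" using True by auto
        then have "b * ln a \<le> \<delta> * ln a" using \<open>b \<ge> \<delta>\<close> by (intro mult_right_mono_neg) auto
        also have "\<delta> * ln a < \<delta> * ln \<eta>" using la dpos by (intro mult_strict_left_mono) auto
        finally have "b * ln a < -(r0+1)" using eta_ln by linarith
        then have "F b a > r0" using F_lb(1)[of a b] True b by linarith
        then show ?thesis unfolding a_def[symmetric] dde using r0le by auto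
      next
        case 2
        then have "(a,b) \<in> K" unfolding K_def R_def a_def using A b by auto
        then show ?thesis unfolding a_def[symmetric] dde using Fmin by auto
      next
        case 3
        have "1 - b \<ge> \<delta>" using bb 3 eta b True by (auto simp: abs_if split: if_splits)
        have la: "ln (1-a) < ln \<eta>" using 3 True eta by auto
        have "ln (1-a) \<le> 0" using True by auto
        then have "(1-b) * ln (1-a) \<le> \<delta> * ln (1-a)" using \<open>1 - b \<ge> \<delta>\<close> by (intro mult_right_mono_neg) auto
        also have "\<delta> * ln (1-a) < \<delta> * ln \<eta>" using la dpos by (intro mult_strict_left_mono) auto
        finally have "(1-b) * ln (1-a) < -(r0+1)" using eta_ln by linarith
        then have "F b a > r0" using F_lb(2)[of a b] True b by linarith
        then show ?thesis unfolding a_def[symmetric] dde using r0le by auto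
      qed
    qed
  qed
  have a1pos: "0 < a1" "a1 < 1" using K1 eta by auto
  have "G v (measure Q A1) \<le> G v (measure Q A')" if "A' \<in> sets Q" for A'
  proof -
    have "G v (measure Q A1) \<le> dd b1 a1"
      unfolding G_def A1(2)[symmetric] using K1 by (intro Inf_lower) auto
    also have "\<dots> = ereal (F b1 a1)" using a1pos by (simp add: dd_def F_def)
    also have "\<dots> \<le> G v (measure Q A')"
      unfolding G_def using key[OF that] by (intro Inf_greatest) auto
    finally show ?thesis .
  qed
  then show ?thesis using A1 by blast
qed



lemma Dstar_eq:
  assumes "sigma_finite_measure M" "Q \<in> probs M" "v > 0"
  shows "Dstar M v Q = Inf {G v (measure Q A) | A. A \<in> sets M}"
proof (rule antisym)
  show "Dstar M v Q \<le> Inf {G v (measure Q A) | A. A \<in> sets M}"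
    unfolding Dstar_def
  proof (rule Inf_greatest, clarify)
    fix A assume A: "A \<in> sets M"
    show "Inf {KL P Q |P. P \<in> probs M \<and> v \<le> tvd M P Q} \<le> G v (measure Q A)"
      unfolding G_def
    proof (rule Inf_greatest, clarify)
      fix b assume b: "0 \<le> b" "b \<le> 1" "v \<le> 2 * \<bar>b - measure Q A\<bar>"
      show "Inf {KL P Q |P. P \<in> probs M \<and> v \<le> tvd M P Q} \<le> dd b (measure Q A)"
      proof (cases "0 < measure Q A \<and> measure Q A < 1")
        case True
        then obtain P where "P \<in> probs M" "tvd M P Q = 2 * \<bar>b - measure Q A\<bar>" "KL P Q = dd b (measure Q A)"
          using lift[OF assms(1,2) A _ _ b(1,2)] by blast
        then show ?thesis using b(3) by (intro Inf_lower) force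
      next
        case False
        then show ?thesis unfolding dd_def by auto
      qed
    qed
  qed
next
  show "Inf {G v (measure Q A) | A. A \<in> sets M} \<le> Dstar M v Q"
    unfolding Dstar_def
  proof (rule Inf_greatest, clarify)
    fix P assume P: "P \<in> probs M" "v \<le> tvd M P Q"
    show "Inf {G v (measure Q A) | A. A \<in> sets M} \<le> KL P Q"
    proof (cases "KL P Q = \<infinity>")
      case True then show ?thesis by simp
    next
      case False
      then obtain A b where A: "A \<in> sets M" and b: "0 \<le> b" "b \<le> 1" "v \<le> 2*\<bar>b - measure Q A\<bar>"
        "dd b (measure Q A) \<le> KL P Q"
        using lower[OF assms(1,2) P(1) assms(3) P(2)] by blast
      have "Inf {G v (measure Q A) | A. A \<in> sets M} \<le> G v (measure Q A)"
        using A by (intro Inf_lower) auto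
      also have "\<dots> \<le> dd b (measure Q A)"
        unfolding G_def using b by (intro Inf_lower) auto
      finally show ?thesis using b(4) by simp
    qed
  qed
qed

lemma G_sym: "G v (1 - a) = G v a"
proof -
  have dds: "dd (1 - b) (1 - a) = dd b a" for b
    unfolding dd_def by (auto simp: algebra_simps)
  have "{dd b (1 - a) | b. 0 \<le> b \<and> b \<le> 1 \<and> v \<le> 2 * \<bar>b - (1 - a)\<bar>}
      = {dd b a | b. 0 \<le> b \<and> b \<le> 1 \<and> v \<le> 2 * \<bar>b - a\<bar>}"
  proof (intro set_eqI iffI)
    fix x assume "x \<in> {dd b (1 - a) | b. 0 \<le> b \<and> b \<le> 1 \<and> v \<le> 2 * \<bar>b - (1 - a)\<bar>}"
    then obtain b where "x = dd b (1-a)" "0 \<le> b" "b \<le> 1" "v \<le> 2 * \<bar>b - (1 - a)\<bar>" by blast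
    then show "x \<in> {dd b a | b. 0 \<le> b \<and> b \<le> 1 \<and> v \<le> 2 * \<bar>b - a\<bar>}"
      using dds[of "1-b"] by (intro CollectI exI[of _ "1-b"]) (auto simp: abs_if split: if_split_asm)
  next
    fix x assume "x \<in> {dd b a | b. 0 \<le> b \<and> b \<le> 1 \<and> v \<le> 2 * \<bar>b - a\<bar>}"
    then obtain b where "x = dd b a" "0 \<le> b" "b \<le> 1" "v \<le> 2 * \<bar>b - a\<bar>" by blast
    then show "x \<in> {dd b (1 - a) | b. 0 \<le> b \<and> b \<le> 1 \<and> v \<le> 2 * \<bar>b - (1 - a)\<bar>}"
      using dds[of "b"] by (intro CollectI exI[of _ "1-b"]) (auto simp: abs_if split: if_split_asm)
  qed
  then show ?thesis unfolding G_def by simp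
qed

lemma G_0: "G v 0 = \<infinity>" and G_1: "G v 1 = \<infinity>"
  unfolding G_def dd_def by (auto intro!: Inf_eqI)

lemma subsets_12: "B \<subseteq> {1, 2::nat} \<Longrightarrow> B = {} \<or> B = {1} \<or> B = {2} \<or> B = {1,2}"
  by auto

theorem lemma3:
  fixes M :: "'a measure" and Q :: "'a measure" and v :: real
  assumes "sigma_finite_measure M"
    and "Q \<in> probs M"
    and "\<exists>A\<in>sets M. 0 < measure Q A \<and> measure Q A < 1"
    and "v > 0"
  shows "\<exists>\<pi> \<in> measurable M (count_space {1, 2::nat}).
           Dstar M v Q = Dstar (count_space {1, 2}) v (distr Q (count_space {1, 2}) \<pi>)"
proof -
  have sQ: "sets Q = sets M" and pQ: "prob_space Q" using assms(2) unfolding probs_def by auto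
  have spQ: "space Q = space M" using sets_eq_imp_space_eq[OF sQ] .
  interpret Q: prob_space Q by (rule pQ)
  obtain A where A: "A \<in> sets Q" and Amin: "\<And>A'. A' \<in> sets Q \<Longrightarrow> G v (measure Q A) \<le> G v (measure Q A')"
    using minimizer[OF pQ assms(4)] by blast
  define \<pi> where "\<pi> = (\<lambda>x. if x \<in> A then 1 else (2::nat))"
  have pim: "\<pi> \<in> measurable M (count_space {1, 2::nat})"
    unfolding \<pi>_def using A sQ by (auto intro!: measurable_If_set)
  then have pimQ: "\<pi> \<in> measurable Q (count_space {1, 2::nat})"
    using sQ by (simp add: measurable_def spQ)
  let ?C = "count_space {1, 2::nat}"
  let ?Q' = "distr Q ?C \<pi>"
  have e1: "Dstar M v Q = G v (measure Q A)"
    unfolding Dstar_eq[OF assms(1,2,4)]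
    using A Amin sQ by (intro antisym Inf_lower Inf_greatest) auto
  have sfC: "sigma_finite_measure ?C"
    by (rule sigma_finite_measure_count_space_finite) auto
  have Q'p: "?Q' \<in> probs ?C"
    unfolding probs_def
  proof (intro CollectI conjI)
    show "prob_space ?Q'" by (rule Q.prob_space_distr[OF pimQ])
    show "absolutely_continuous ?C ?Q'"
      unfolding absolutely_continuous_def
      by (auto simp: null_sets_def emeasure_count_space card_eq_0_iff split: if_splits)
  qed simp
  have mQ': "measure ?Q' B = measure Q {x \<in> space M. \<pi> x \<in> B}" if "B \<subseteq> {1,2}" for B
    using that pimQ by (subst measure_distr) (auto simp: spQ vimage_def Int_def conj_commute)
  have pre1: "{x \<in> space M. \<pi> x \<in> {1}} = A" using A sQ sets.sets_into_space unfolding \<pi>_def by auto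
  have pre2: "{x \<in> space M. \<pi> x \<in> {2}} = space M - A" unfolding \<pi>_def by auto
  have pre12: "{x \<in> space M. \<pi> x \<in> {1,2}} = space M" unfolding \<pi>_def by auto
  have pre0: "{x \<in> space M. \<pi> x \<in> {}} = {}" by auto
  have e2: "Dstar ?C v ?Q' = G v (measure Q A)"
    unfolding Dstar_eq[OF sfC Q'p assms(4)]
  proof (intro antisym Inf_lower Inf_greatest)
    show "G v (measure Q A) \<in> {G v (measure ?Q' B) | B. B \<in> sets ?C}"
      using mQ'[of "{1}"] pre1 by (intro CollectI exI[of _ "{1}"]) auto
  next
    fix y assume "y \<in> {G v (measure ?Q' B) | B. B \<in> sets ?C}"
    then obtain B where B: "B \<subseteq> {1,2}" "y = G v (measure ?Q' B)" by auto
    have cA: "measure Q (space M - A) = 1 - measure Q A"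
      using A sQ spQ Q.prob_compl by auto
    from subsets_12[OF B(1)] show "G v (measure Q A) \<le> y"
      using B mQ'[OF B(1)] pre1 pre2 pre12 pre0 cA Q.prob_space spQ
      by (auto simp: G_0 G_1 G_sym)
  qed
  show ?thesis using pim e1 e2 by (intro bexI[of _ \<pi>]) auto
qed


end
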